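(* Let $\alpha,\beta>1$ with $\alpha+\beta\leqslant4$ and let $V,W$ satisfy (H1)–(H2). Let $e_0\in C_0^\infty(\Omega_1\cap\Omega_2)$ with $e_0^+\not\equiv0$ and $b^*>0$ be such that $\mathcal{J}^T_{\mathbf b,\lambda}((e_0,e_0))<0$ for all $T,\lambda>0$ and all $b_1,b_2>0$ with $b_1+b_2\in(0,b^* )$. Then there exists $D>0$, independent of $b_1,b_2,T,\lambda$, such that $c^T_{\mathbf b,\lambda}\leqslant D$ for any $\lambda\geqslant1$, $T>0$ and $b_1+b_2\in(0,b^* )$.
   Context: (H1) $V,W\in C(\mathbb{R}^3,[0,\infty))$; $\Omega_1=\operatorname{int}V^{-1}(0)$, $\Omega_2=\operatorname{int}W^{-1}(0)$ have smooth boundaries, $\overline{\Omega}_1=V^{-1}(0)$, $\overline{\Omega}_2=W^{-1}(0)$, $\Omega_1\cap\Omega_2\neq\emptyset$. (H2) There is $c>0$ with $\{x: V(x)W(x)\leqslant c^2\}$ of finite positive Lebesgue measure. $E=E_V\times E_W$, $E_V=\{u\in\mathcal{D}^{1,2}(\mathbb{R}^3):\int Vu^2<\infty\}$, $E_W$ analogous; $E_\lambda$ is $E$ with norm $\|z\|_\lambda^2=\int(|\nabla u|^2+|\nabla v|^2+\lambda Vu^2+\lambda Wv^2)$. $\mathcal{J}^T_{\mathbf b,\lambda}(z)=\frac12\|z\|_\lambda^2+\frac14\xi(\|z\|_\lambda^2/T^2)(b_1\|\nabla u\|_2^4+b_2\|\nabla v\|_2^4)-\frac{1}{\alpha+\beta}\int|u^+|^\alpha|v^+|^\beta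 dx$, with $\xi\in C^\infty([0,\infty),[0,1])$, $\xi=1$ on $[0,1]$, $\xi=0$ on $[2,\infty)$, $\xi'\leqslant0$, $\|\xi'\|_\infty\leqslant2$. The mountain pass level is $c^T_{\mathbf b,\lambda}=\inf_{\gamma\in\Gamma}\max_{t\in[0,1]}\mathcal{J}^T_{\mathbf b,\lambda}(\gamma(t))$, $\Gamma=\{\gamma\in C([0,1],E_\lambda):\gamma(0)=(0,0),\gamma(1)=(e_0,e_0)\}$. *)

theory Defs
  imports "HOL-Analysis.Analysis"
begin

type_synonym R3 = "real^3"
type_synonym fn3 = "R3 \<Rightarrow> real"

definition pd :: "3 \<Rightarrow> fn3 \<Rightarrow> fn3" where
  "pd i f x = deriv (\<lambda>t. f (x + t *\<^sub>R axis i 1)) 0"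

definition smooth_on :: "R3 set \<Rightarrow> fn3 \<Rightarrow> bool" where
  "smooth_on S f \<longleftrightarrow>
     (\<forall>is :: 3 list. continuous_on S (foldr pd is f) \<and>
        (\<forall>x\<in>S. \<forall>i. (\<lambda>t. foldr pd is f (x + t *\<^sub>R axis i 1)) differentiable (at 0)))"

definition tsupport :: "fn3 \<Rightarrow> R3 set" where
  "tsupport f = closure {x. f x \<noteq> 0}"

definition Cc_inf :: "R3 set \<Rightarrow> fn3 \<Rightarrow> bool" where
  "Cc_inf \<Omega> f \<longleftrightarrow> smooth_on UNIV f \<and> compact (tsupport f) \<and> tsupport f \<subseteq> \<Omega>"

definition smooth_boundary :: "R3 set \<Rightarrow> bool" where
  "smooth_boundary \<Omega> \<longleftrightarrow>
     (\<forall>p\<in>frontier \<Omega>. \<exists>U \<rho>. open U \<and> p \<in> U \<and> smooth_on U \<rho> \<and>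
        (\<forall>x\<in>U. \<exists>i. pd i \<rho> x \<noteq> 0) \<and> \<Omega> \<inter> U = {x\<in>U. \<rho> x < 0})"

definition weak_grad :: "fn3 \<Rightarrow> (R3 \<Rightarrow> R3) \<Rightarrow> bool" where
  "weak_grad u g \<longleftrightarrow>
     (\<forall>\<phi>. Cc_inf UNIV \<phi> \<longrightarrow> (\<forall>i.
        integrable lborel (\<lambda>x. u x * pd i \<phi> x) \<and>
        integrable lborel (\<lambda>x. g x $ i * \<phi> x) \<and>
        (\<integral>x. u x * pd i \<phi> x \<partial>lborel) = - (\<integral>x. g x $ i * \<phi> x \<partial>lborel)))"

definition good_grad :: "fn3 \<Rightarrow> (R3 \<Rightarrow> R3) \<Rightarrow> bool" where
  "good_grad u g \<longleftrightarrow> weak_grad u g \<and> g \<in> borel_measurable lborel \<and>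
      integrable lborel (\<lambda>x. (norm (g x))\<^sup>2)"

definition D12 :: "fn3 set" where
  "D12 = {u. u \<in> borel_measurable lborel \<and> integrable lborel (\<lambda>x. \<bar>u x\<bar> ^ 6) \<and>
             (\<exists>g. good_grad u g)}"

definition grad :: "fn3 \<Rightarrow> R3 \<Rightarrow> R3" where
  "grad u = (SOME g. good_grad u g)"

definition gradsq :: "fn3 \<Rightarrow> real" where
  "gradsq u = (\<integral>x. (norm (grad u x))\<^sup>2 \<partial>lborel)"

definition E_pot :: "fn3 \<Rightarrow> fn3 set" where
  "E_pot V = {u \<in> D12. integrable lborel (\<lambda>x. V x * (u x)\<^sup>2)}"

definition E_sp :: "fn3 \<Rightarrow> fn3 \<Rightarrow> (fn3 \<times> fn3) set" where
  "E_sp V W = E_pot V \<times> E_pot W"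

definition normsq :: "real \<Rightarrow> fn3 \<Rightarrow> fn3 \<Rightarrow> fn3 \<times> fn3 \<Rightarrow> real" where
  "normsq lam V W z = gradsq (fst z) + gradsq (snd z)
      + lam * (\<integral>x. V x * (fst z x)\<^sup>2 \<partial>lborel) + lam * (\<integral>x. W x * (snd z x)\<^sup>2 \<partial>lborel)"

definition Jfun :: "(real \<Rightarrow> real) \<Rightarrow> real \<Rightarrow> real \<Rightarrow> real \<Rightarrow> real \<Rightarrow> real \<Rightarrow> real
                   \<Rightarrow> fn3 \<Rightarrow> fn3 \<Rightarrow> fn3 \<times> fn3 \<Rightarrow> real" where
  "Jfun \<xi> \<alpha> \<beta> b1 b2 T lam V W z =
     normsq lam V W z / 2
     + \<xi> (normsq lam V W z / T\<^sup>2) * (b1 * (gradsq (fst z))\<^sup>2 + b2 * (gradsq (snd z))\<^sup>2) / 4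
     - (\<integral>x. (max (fst z x) 0) powr \<alpha> * (max (snd z x) 0) powr \<beta> \<partial>lborel) / (\<alpha> + \<beta>)"

definition paths :: "real \<Rightarrow> fn3 \<Rightarrow> fn3 \<Rightarrow> fn3 \<Rightarrow> (real \<Rightarrow> fn3 \<times> fn3) set" where
  "paths lam V W e0 = {\<gamma>. (\<forall>t\<in>{0..1}. \<gamma> t \<in> E_sp V W) \<and>
      (\<forall>t\<in>{0..1}. \<forall>\<epsilon>>0. \<exists>\<delta>>0. \<forall>s\<in>{0..1}. \<bar>s - t\<bar> < \<delta> \<longrightarrow>
          sqrt (normsq lam V W (\<lambda>x. fst (\<gamma> s) x - fst (\<gamma> t) x, \<lambda>x. snd (\<gamma> s) x - snd (\<gamma> t) x)) < \<epsilon>) \<and>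
      \<gamma> 0 = (\<lambda>x. 0, \<lambda>x. 0) \<and> \<gamma> 1 = (e0, e0)}"

definition mp_level :: "(real \<Rightarrow> real) \<Rightarrow> real \<Rightarrow> real \<Rightarrow> real \<Rightarrow> real \<Rightarrow> real \<Rightarrow> real
                   \<Rightarrow> fn3 \<Rightarrow> fn3 \<Rightarrow> fn3 \<Rightarrow> ereal" where
  "mp_level \<xi> \<alpha> \<beta> b1 b2 T lam V W e0 =
     (INF \<gamma>\<in>paths lam V W e0. SUP t\<in>{0..1}. ereal (Jfun \<xi> \<alpha> \<beta> b1 b2 T lam V W (\<gamma> t)))"

definition cutoff :: "(real \<Rightarrow> real) \<Rightarrow> bool" where
  "cutoff \<xi> \<longleftrightarrow> (\<forall>n x. ((deriv ^^ n) \<xi>) differentiable (at x)) \<and>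
     (\<forall>x\<ge>0. 0 \<le> \<xi> x \<and> \<xi> x \<le> 1) \<and> (\<forall>x\<in>{0..1}. \<xi> x = 1) \<and> (\<forall>x\<ge>2. \<xi> x = 0) \<and>
     (\<forall>x\<ge>0. deriv \<xi> x \<le> 0 \<and> \<bar>deriv \<xi> x\<bar> \<le> 2)"

definition H1 :: "fn3 \<Rightarrow> fn3 \<Rightarrow> bool" where
  "H1 V W \<longleftrightarrow> continuous_on UNIV V \<and> continuous_on UNIV W \<and>
     (\<forall>x. V x \<ge> 0) \<and> (\<forall>x. W x \<ge> 0) \<and>
     smooth_boundary (interior (V -` {0})) \<and> smooth_boundary (interior (W -` {0})) \<and>
     closure (interior (V -` {0})) = V -` {0} \<and> closure (interior (W -` {0})) = W -` {0} \<and>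
     interior (V -` {0}) \<inter> interior (W -` {0}) \<noteq> {}"

definition H2 :: "fn3 \<Rightarrow> fn3 \<Rightarrow> bool" where
  "H2 V W \<longleftrightarrow> (\<exists>c>0. 0 < emeasure lborel {x. V x * W x \<le> c\<^sup>2} \<and>
                        emeasure lborel {x. V x * W x \<le> c\<^sup>2} < \<infinity>)"

end

theory Submission
  imports Defs "HOL-Computational_Algebra.Polynomial"
begin

definition smooth1 :: "(real \<Rightarrow> real) \<Rightarrow> bool" where
  "smooth1 f \<longleftrightarrow> (\<forall>n x. (deriv ^^ n) f differentiable (at x))"

lemma smooth1_DERIV: "smooth1 f \<Longrightarrow> (f has_real_derivative deriv f x) (at x)"
  unfolding smooth1_def DERIV_deriv_iff_real_differentiable
  by (metis funpow_0)

lemma smooth1_deriv: "smooth1 f \<Longrightarrow> smooth1 (deriv f)"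
  unfolding smooth1_def by (metis funpow_Suc_right o_apply)

lemma smooth1_cont: "smooth1 f \<Longrightarrow> isCont f x"
  using smooth1_DERIV DERIV_isCont by blast

lemma smooth1_derivn: "smooth1 f \<Longrightarrow> smooth1 ((deriv ^^ n) f)"
  by (induction n) (auto simp: smooth1_deriv)

lemma smooth1I:
  assumes "\<And>x. (f has_real_derivative f' x) (at x)" "smooth1 f'"
  shows "smooth1 f"
proof -
  have d: "deriv f = f'" using assms(1) DERIV_imp_deriv by blast
  show ?thesis unfolding smooth1_def
  proof (intro allI)
    fix n x show "(deriv ^^ n) f differentiable (at x)"
    proof (cases n)
      case 0 then show ?thesis using assms(1) real_differentiable_def by auto
    next
      case (Suc m)
      then have "(deriv ^^ n) f = (deriv ^^ m) f'" by (simp add: funpow_Suc_right d del: funpow.simps)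
      then show ?thesis using assms(2) unfolding smooth1_def by simp
    qed
  qed
qed

lemma smooth1_const: "smooth1 (\<lambda>_. c)"
proof -
  have "\<forall>c. \<exists>c'. (deriv ^^ n) (\<lambda>_::real. c::real) = (\<lambda>_. c')" for n
  proof (induction n)
    case 0 then show ?case by auto
  next
    case (Suc n)
    have "deriv (\<lambda>_::real. c::real) = (\<lambda>_. 0)" for c by (rule ext) simp
    then show ?case using Suc by (simp add: funpow_Suc_right del: funpow.simps)
  qed
  then show ?thesis unfolding smooth1_def by (metis differentiable_const)
qed

lemma smooth1_affine_aux:
  "\<forall>f c. smooth1 f \<longrightarrow> (deriv ^^ n) (\<lambda>x. c * f (a * x + b)) = (\<lambda>x. c * a ^ n * (deriv ^^ n) f (a * x + b))"
proof (induction n)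
  case 0 then show ?case by simp
next
  case (Suc n)
  show ?case
  proof (intro allI impI)
    fix f c assume f: "smooth1 f"
    have "((\<lambda>x. c * f (a * x + b)) has_real_derivative (c * a * deriv f (a * x + b))) (at x)" for x
    proof -
      have "((\<lambda>x. a * x + b) has_real_derivative a) (at x)"
        by (auto intro!: derivative_eq_intros)
      from DERIV_chain2[where g="\<lambda>x. a * x + b", OF smooth1_DERIV[OF f] this]
      show ?thesis by (auto intro!: derivative_eq_intros simp: ac_simps)
    qed
    then have d: "deriv (\<lambda>x. c * f (a * x + b)) = (\<lambda>x. (c * a) * deriv f (a * x + b))"
      using DERIV_imp_deriv by blast
    show "(deriv ^^ Suc n) (\<lambda>x. c * f (a * x + b)) = (\<lambda>x. c * a ^ Suc n * (deriv ^^ Suc n) f (a * x + b))"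
      apply (simp only: funpow_Suc_right o_apply d)
      using Suc[rule_format, OF smooth1_deriv[OF f], of "c * a"] by (simp add: ac_simps)
  qed
qed

lemma smooth1_affine: "smooth1 f \<Longrightarrow> smooth1 (\<lambda>x. c * f (a * x + b))"
proof -
  assume f: "smooth1 f"
  have "(\<lambda>x. c * a ^ n * (deriv ^^ n) f (a * x + b)) differentiable (at x)" for n x
  proof -
    have "(\<lambda>x. (deriv ^^ n) f (a * x + b)) differentiable (at x)"
      by (rule differentiable_compose[of "(deriv ^^ n) f"]) (use f in \<open>auto simp: smooth1_def intro!: derivative_intros\<close>)
    then show ?thesis by (intro derivative_intros) auto
  qed
  then show ?thesis using smooth1_affine_aux f unfolding smooth1_def by simp
qed

lemma add_derivn:
  fixes u v :: "real \<Rightarrow> real"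
  shows "(\<forall>k<m. \<forall>x. (deriv ^^ k) u differentiable (at x)) \<Longrightarrow> (\<forall>k<m. \<forall>x. (deriv ^^ k) v differentiable (at x)) \<Longrightarrow>
   (deriv ^^ m) (\<lambda>x. u x + v x) = (\<lambda>x. (deriv ^^ m) u x + (deriv ^^ m) v x)"
proof (induction m arbitrary: u v)
  case 0 then show ?case by simp
next
  case (Suc m)
  have "deriv (\<lambda>x. u x + v x) = (\<lambda>x. deriv u x + deriv v x)"
  proof
    fix x
    have "(u has_real_derivative deriv u x) (at x)" "(v has_real_derivative deriv v x) (at x)"
      using Suc.prems[rule_format, of 0 x] by (auto simp: DERIV_deriv_iff_real_differentiable)
    then show "deriv (\<lambda>x. u x + v x) x = deriv u x + deriv v x"
      by (intro DERIV_imp_deriv derivative_eq_intros) auto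
  qed
  moreover have "\<forall>k<m. \<forall>x. (deriv ^^ k) (deriv u) differentiable (at x)"
     "\<forall>k<m. \<forall>x. (deriv ^^ k) (deriv v) differentiable (at x)"
  proof -
    have e: "(deriv ^^ k) (deriv w) = (deriv ^^ Suc k) w" for k and w :: "real \<Rightarrow> real"
      by (simp add: funpow_Suc_right del: funpow.simps)
    show "\<forall>k<m. \<forall>x. (deriv ^^ k) (deriv u) differentiable (at x)"
      "\<forall>k<m. \<forall>x. (deriv ^^ k) (deriv v) differentiable (at x)"
      unfolding e using Suc.prems by auto
  qed
  ultimately show ?case
    using Suc.IH[of "deriv u" "deriv v"] by (simp add: funpow_Suc_right del: funpow.simps)
qed

lemma smooth1_mult_aux:
  "\<forall>f g. smooth1 f \<longrightarrow> smooth1 g \<longrightarrow> (\<forall>k\<le>n. \<forall>x. (deriv ^^ k) (\<lambda>x. f x * g x) differentiable (at x))"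
proof (induction n)
  case 0
  have "smooth1 f \<Longrightarrow> f differentiable (at x)" for f x unfolding smooth1_def by (metis funpow_0)
  then show ?case by auto
next
  case (Suc n)
  show ?case
  proof (intro allI impI)
    fix f g k x assume f: "smooth1 f" and g: "smooth1 g" and k: "k \<le> Suc n"
    show "(deriv ^^ k) (\<lambda>x. f x * g x) differentiable (at x)"
    proof (cases "k \<le> n")
      case True then show ?thesis using Suc f g by blast
    next
      case False
      then have kk: "k = Suc n" using k by simp
      have d: "deriv (\<lambda>x. f x * g x) = (\<lambda>x. deriv f x * g x + f x * deriv g x)"
      proof
        fix x show "deriv (\<lambda>x. f x * g x) x = deriv f x * g x + f x * deriv g x"
          using smooth1_DERIV[OF f, of x] smooth1_DERIV[OF g, of x]
          by (intro DERIV_imp_deriv) (auto intro!: derivative_eq_intros)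
      qed
      have A: "\<forall>k\<le>n. \<forall>x. (deriv ^^ k) (\<lambda>x. deriv f x * g x) differentiable (at x)"
        using Suc f g smooth1_deriv by blast
      have B: "\<forall>k\<le>n. \<forall>x. (deriv ^^ k) (\<lambda>x. f x * deriv g x) differentiable (at x)"
        using Suc f g smooth1_deriv by blast
      have "(deriv ^^ k) (\<lambda>x. f x * g x) = (deriv ^^ n) (\<lambda>x. deriv f x * g x + f x * deriv g x)"
        by (simp add: kk funpow_Suc_right d del: funpow.simps)
      also have "\<dots> = (\<lambda>x. (deriv ^^ n) (\<lambda>x. deriv f x * g x) x + (deriv ^^ n) (\<lambda>x. f x * deriv g x) x)"
        by (rule add_derivn) (use A B in auto)
      finally show ?thesis using A B by (auto intro!: derivative_intros)
    qed
  qed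
qed

lemma smooth1_mult: "smooth1 f \<Longrightarrow> smooth1 g \<Longrightarrow> smooth1 (\<lambda>x. f x * g x)"
  using smooth1_mult_aux unfolding smooth1_def by blast


definition Gp :: "real poly \<Rightarrow> real \<Rightarrow> real" where
  "Gp p x = (if x \<le> 0 then 0 else poly p (1/x) * exp (- (1/x)))"

definition qstep :: "real poly \<Rightarrow> real poly" where
  "qstep p = [:0,0,1:] * (p - pderiv p)"

lemma poly_exp_lim: "((\<lambda>y. poly p y * exp (-y)) \<longlongrightarrow> (0::real)) at_top"
proof -
  have e: "(\<lambda>y. poly p y * exp (-y)) = (\<lambda>y. \<Sum>i\<le>degree p. coeff p i * (y ^ i / exp y))"
    by (rule ext) (simp add: poly_altdef sum_distrib_right exp_minus divide_inverse mult.assoc)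
  show ?thesis unfolding e
    by (intro tendsto_null_sum tendsto_mult_right_zero tendsto_power_div_exp_0)
qed

lemma Gp_DERIV: "(Gp p has_real_derivative Gp (qstep p) x) (at x)"
proof -
  consider "x > 0" | "x < 0" | "x = 0" by linarith
  then show ?thesis
  proof cases
    case 1
    have inv: "((\<lambda>x. 1/x) has_real_derivative (-1/x^2)) (at x)"
      using 1 by (auto intro!: derivative_eq_intros simp: power2_eq_square field_simps)
    have h1: "((\<lambda>x. poly p (1/x)) has_real_derivative poly (pderiv p) (1/x) * (-1/x^2)) (at x)"
      by (rule DERIV_chain2[where f="poly p" and g="\<lambda>x. 1/x", OF poly_DERIV inv])
    have inv2: "((\<lambda>x. - (1/x)) has_real_derivative (- (-1/x^2))) (at x)"
      by (rule DERIV_minus[OF inv])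
    have h2: "((\<lambda>x. exp (- (1/x))) has_real_derivative exp (- (1/x)) * (- (-1/x^2))) (at x)"
      by (rule DERIV_chain2[where f=exp and g="\<lambda>x. - (1/x)", OF DERIV_exp inv2])
    have "((\<lambda>x. poly p (1/x) * exp (- (1/x))) has_real_derivative
           poly (pderiv p) (1/x) * (-1/x^2) * exp (- (1/x)) + exp (- (1/x)) * (- (-1/x^2)) * poly p (1/x)) (at x)"
      by (rule DERIV_mult[OF h1 h2])
    moreover have "poly (pderiv p) (1/x) * (-1/x^2) * exp (- (1/x)) + exp (- (1/x)) * (- (-1/x^2)) * poly p (1/x)
        = Gp (qstep p) x"
      using 1 by (simp add: Gp_def qstep_def algebra_simps power2_eq_square)
    ultimately have d: "((\<lambda>x. poly p (1/x) * exp (- (1/x))) has_real_derivative Gp (qstep p) x) (at x)"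
      by simp
    show ?thesis
      by (rule has_field_derivative_transform_within_open[OF d, of "{0<..}"]) (use 1 in \<open>auto simp: Gp_def\<close>)
  next
    case 2
    have d: "((\<lambda>x. 0) has_real_derivative Gp (qstep p) x) (at x)"
      using 2 by (simp add: Gp_def)
    show ?thesis
      by (rule has_field_derivative_transform_within_open[OF d, of "{..<0}"]) (use 2 in \<open>auto simp: Gp_def\<close>)
  next
    case 3
    have "((\<lambda>y. (Gp p y - Gp p 0) / (y - 0)) \<longlongrightarrow> 0) (at 0)"
    proof (rule filterlim_split_at)
      show "((\<lambda>y. (Gp p y - Gp p 0) / (y - 0)) \<longlongrightarrow> 0) (at_left 0)"
      proof (rule Lim_transform_eventually[OF tendsto_const])
        show "\<forall>\<^sub>F y in at_left 0. 0 = (Gp p y - Gp p 0) / (y - 0)"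
          unfolding eventually_at_left_field by (auto simp: Gp_def intro!: exI[of _ "-1"])
      qed
      have lim: "((\<lambda>y. poly (pCons 0 p) (inverse y) * exp (- inverse y)) \<longlongrightarrow> 0) (at_right 0)"
        by (rule filterlim_compose[OF poly_exp_lim filterlim_inverse_at_top_right])
      show "((\<lambda>y. (Gp p y - Gp p 0) / (y - 0)) \<longlongrightarrow> 0) (at_right 0)"
      proof (rule Lim_transform_eventually[OF lim])
        show "\<forall>\<^sub>F y in at_right 0. poly (pCons 0 p) (inverse y) * exp (- inverse y) = (Gp p y - Gp p 0) / (y - 0)"
          unfolding eventually_at_right_field
        proof (intro exI[of _ 1] conjI allI impI)
          fix y :: real assume y: "0 < y" "y < 1"
          then show "poly (pCons 0 p) (inverse y) * exp (- inverse y) = (Gp p y - Gp p 0) / (y - 0)"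
            by (simp add: Gp_def divide_inverse)
        qed simp
      qed
    qed
    then show ?thesis using 3 by (simp add: has_field_derivative_iff Gp_def)
  qed
qed

lemma Gp_deriv: "deriv (Gp p) = Gp (qstep p)"
  using Gp_DERIV DERIV_imp_deriv by blast

lemma Gp_derivn: "(deriv ^^ n) (Gp p) = Gp ((qstep ^^ n) p)"
proof (induction n arbitrary: p)
  case 0 then show ?case by simp
next
  case (Suc n) then show ?case
    by (simp add: funpow_Suc_right Gp_deriv del: funpow.simps)
qed

lemma smooth1_Gp: "smooth1 (Gp p)"
  unfolding smooth1_def Gp_derivn using Gp_DERIV real_differentiable_def by blast

definition Bump :: "real \<Rightarrow> real" where
  "Bump x = Gp 1 x * Gp 1 (1 - x)"

lemma smooth1_Bump: "smooth1 Bump"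
proof -
  have "smooth1 (\<lambda>x. 1 * Gp 1 ((-1) * x + 1))"
    by (rule smooth1_affine[OF smooth1_Gp])
  then have "smooth1 (\<lambda>x. Gp 1 (1 - x))" by simp
  then show ?thesis unfolding Bump_def[abs_def] by (intro smooth1_mult smooth1_Gp)
qed

lemma Bump_nonneg: "Bump x \<ge> 0"
  by (simp add: Bump_def Gp_def)

lemma Bump_zero: "x \<le> 0 \<or> x \<ge> 1 \<Longrightarrow> Bump x = 0"
  by (auto simp: Bump_def Gp_def)

lemma Bump_pos: "Bump (1/2) > 0"
  by (simp add: Bump_def Gp_def)

lemma Bump_cont: "continuous_on A Bump"
  using smooth1_cont[OF smooth1_Bump] continuous_at_imp_continuous_on by blast

definition Fint :: "real \<Rightarrow> real" where
  "Fint x = integral {-1..x} Bump"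

lemma Fint_zero: "x \<le> 0 \<Longrightarrow> Fint x = 0"
proof -
  assume x: "x \<le> 0"
  have "integral {-1..x} Bump = integral {-1..x} (\<lambda>_. 0::real)"
  proof (rule integral_cong)
    fix y assume "y \<in> {-1..x}"
    then show "Bump y = 0" using x Bump_zero[of y] by simp
  qed
  then show ?thesis by (simp add: Fint_def)
qed

lemma Fint_DERIV: "(Fint has_real_derivative Bump x) (at x)"
proof (cases "x < 0")
  case True
  have d: "((\<lambda>x. 0) has_real_derivative Bump x) (at x)"
    using True Bump_zero by simp
  show ?thesis
    by (rule has_field_derivative_transform_within_open[OF d, of "{..<0}"]) (use True Fint_zero in auto)
next
  case False
  have "(Fint has_real_derivative Bump x) (at x within {-1..x+1})"
    unfolding Fint_def[abs_def]
    by (rule integral_has_real_derivative) (use False Bump_cont in simp_all)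
  moreover have "at x within {-1..x+1} = at x"
    by (rule at_within_interior) (use False in simp)
  ultimately show ?thesis by simp
qed

lemma smooth1_Fint: "smooth1 Fint"
  by (rule smooth1I[OF Fint_DERIV smooth1_Bump])

lemma Fint_cont: "continuous_on A Fint"
  using Fint_DERIV DERIV_isCont continuous_at_imp_continuous_on by blast

lemma Fint_mono: "x \<le> y \<Longrightarrow> Fint x \<le> Fint y"
proof (rule DERIV_nonneg_imp_increasing_open[of x y Fint])
  fix z assume "x < z" "z < y"
  show "\<exists>d. (Fint has_real_derivative d) (at z) \<and> 0 \<le> d"
    using Fint_DERIV[of z] Bump_nonneg[of z] by blast
qed (auto intro: Fint_cont)

lemma Fint_const: "1 \<le> x \<Longrightarrow> Fint x = Fint 1"
proof -
  assume x: "1 \<le> x"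
  show ?thesis
  proof (cases "x = 1")
    case False
    then have "x > 1" using x by simp
    have c: "continuous_on {1..x} Fint" by (rule Fint_cont)
    show ?thesis
    proof (rule DERIV_isconst2[of 1 x Fint, OF \<open>x > 1\<close> c])
      fix y assume "1 < y" "y < x"
      then show "(Fint has_real_derivative 0) (at y)" using Fint_DERIV[of y] Bump_zero[of y] by simp
    qed (use x in simp_all)
  qed simp
qed

lemma Fint_pos: "Fint 1 > 0"
proof (rule ccontr)
  assume "\<not> Fint 1 > 0"
  then have z: "Fint 1 \<le> 0" by simp
  have z0: "Fint y = 0" if "-1 < y" "y < 1" for y
  proof -
    have "Fint (-1) \<le> Fint y" "Fint y \<le> Fint 1" using that Fint_mono by auto
    then show ?thesis using z Fint_zero[of "-1"] by simp
  qed
  have d: "((\<lambda>x. 0) has_real_derivative Bump (1/2)) (at (1/2))"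
  proof (rule has_field_derivative_transform_within_open[OF Fint_DERIV, of "{-1<..<1}"])
    fix y :: real assume "y \<in> {-1<..<1}"
    then show "Fint y = 0" using z0 by simp
  qed simp_all
  then have "Bump (1/2) = 0" using DERIV_unique[OF d DERIV_const] by simp
  then show False using Bump_pos by simp
qed

definition Step :: "real \<Rightarrow> real" where
  "Step x = Fint x / Fint 1"

lemma smooth1_Step: "smooth1 Step"
proof -
  have "smooth1 (\<lambda>x. (1 / Fint 1) * Fint (1 * x + 0))"
    by (rule smooth1_affine[OF smooth1_Fint])
  then show ?thesis unfolding Step_def[abs_def] by simp
qed

lemma Step_zero: "x \<le> 0 \<Longrightarrow> Step x = 0"
  by (simp add: Step_def Fint_zero)

lemma Step_one: "1 \<le> x \<Longrightarrow> Step x = 1"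
  using Fint_const[of x] Fint_pos by (simp add: Step_def)

lemma Step_bounds: "0 \<le> Step x \<and> Step x \<le> 1"
proof -
  have "0 \<le> Fint x"
    using Fint_mono[of 0 x] Fint_zero[of 0] Fint_zero[of x] by (cases "x \<le> 0") auto
  moreover have "Fint x \<le> Fint 1"
  proof (cases "x \<le> 1")
    case True then show ?thesis using Fint_mono[of x 1] by simp
  next
    case False then show ?thesis using Fint_const[of x] by simp
  qed
  ultimately show ?thesis using Fint_pos by (simp add: Step_def)
qed


definition Tp :: "(3 \<Rightarrow> real \<Rightarrow> real) \<Rightarrow> (3 \<Rightarrow> nat) \<Rightarrow> R3 \<Rightarrow> real" where
  "Tp u m x = (\<Prod>i\<in>UNIV. (deriv ^^ m i) (u i) (x $ i))"

lemma axis_comp: "(x + t *\<^sub>R axis j 1) $ i = x $ i + (if i = j then t else 0)"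
  by (simp add: axis_def)

lemma Tp_split: "Tp u m y = (\<Prod>i\<in>UNIV-{j}. (deriv ^^ m i) (u i) (y $ i)) * (deriv ^^ m j) (u j) (y $ j)"
  unfolding Tp_def by (subst prod.remove[of UNIV j]) (auto simp: mult.commute)

lemma Tp_line: "Tp u m (x + t *\<^sub>R axis j 1) =
    (\<Prod>i\<in>UNIV-{j}. (deriv ^^ m i) (u i) (x $ i)) * (deriv ^^ m j) (u j) (x $ j + t)"
proof -
  have "(\<Prod>i\<in>UNIV-{j}. (deriv ^^ m i) (u i) ((x + t *\<^sub>R axis j 1) $ i)) =
        (\<Prod>i\<in>UNIV-{j}. (deriv ^^ m i) (u i) (x $ i))"
    by (rule prod.cong) (auto simp: axis_def)
  then show ?thesis by (simp add: Tp_split[of u m _ j] axis_comp)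
qed

lemma Tp_DERIV:
  assumes u: "\<And>i. smooth1 (u i)"
  shows "((\<lambda>t. Tp u m (x + t *\<^sub>R axis j 1)) has_real_derivative Tp u (m(j := Suc (m j))) x) (at 0)"
proof -
  let ?c = "\<Prod>i\<in>UNIV-{j}. (deriv ^^ m i) (u i) (x $ i)"
  let ?D = "(deriv ^^ m j) (u j)"
  have sD: "smooth1 ?D" by (rule smooth1_derivn[OF u])
  have g: "((\<lambda>t. x $ j + t) has_real_derivative 1) (at 0)"
    by (auto intro!: derivative_eq_intros)
  have "((\<lambda>t. ?D (x $ j + t)) has_real_derivative deriv ?D (x $ j) * 1) (at 0)"
    using DERIV_chain2[where f="?D" and g="\<lambda>t. x $ j + t", OF _ g] smooth1_DERIV[OF sD, of "x $ j"]
    by simp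
  then have "((\<lambda>t. ?c * ?D (x $ j + t)) has_real_derivative ?c * (deriv ?D (x $ j) * 1)) (at 0)"
    by (rule DERIV_cmult)
  moreover have "?c * (deriv ?D (x $ j) * 1) = Tp u (m(j := Suc (m j))) x"
  proof -
    have "(\<Prod>i\<in>UNIV-{j}. (deriv ^^ (m(j := Suc (m j))) i) (u i) (x $ i)) = ?c"
      by (rule prod.cong) auto
    then show ?thesis by (simp add: Tp_split[of u _ _ j])
  qed
  ultimately show ?thesis by (simp add: Tp_line)
qed

lemma pd_Tp: "(\<And>i. smooth1 (u i)) \<Longrightarrow> pd j (Tp u m) = Tp u (m(j := Suc (m j)))"
  unfolding pd_def[abs_def] using Tp_DERIV DERIV_imp_deriv by blast

lemma foldr_pd_Tp: "(\<And>i. smooth1 (u i)) \<Longrightarrow> \<exists>m'. foldr pd is (Tp u m) = Tp u m'"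
proof (induction "is")
  case Nil then show ?case by auto
next
  case (Cons i "is")
  then obtain m' where "foldr pd is (Tp u m) = Tp u m'" by blast
  then show ?case using pd_Tp[OF Cons.prems] by auto
qed

lemma Tp_cont:
  assumes u: "\<And>i. smooth1 (u i)"
  shows "continuous_on S (Tp u m)"
proof -
  have c: "continuous_on UNIV (\<lambda>x::R3. (deriv ^^ m i) (u i) (x $ i))" for i
  proof -
    have "continuous_on UNIV ((deriv ^^ m i) (u i))"
      using smooth1_cont[OF smooth1_derivn[OF u]] continuous_at_imp_continuous_on by blast
    then show ?thesis
      by (rule continuous_on_compose2[of UNIV _ UNIV "\<lambda>x::R3. x $ i"]) (auto intro: continuous_intros)
  qed
  show ?thesis unfolding Tp_def[abs_def]
    by (intro continuous_on_prod continuous_on_subset[OF c]) auto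
qed

lemma smooth_on_Tp:
  assumes u: "\<And>i. smooth1 (u i)"
  shows "smooth_on S (Tp u m)"
  unfolding smooth_on_def
proof (intro allI conjI ballI)
  fix "is" :: "3 list"
  obtain m' where e: "foldr pd is (Tp u m) = Tp u m'" using foldr_pd_Tp[of u, OF u] by blast
  show "continuous_on S (foldr pd is (Tp u m))" unfolding e by (rule Tp_cont[OF u])
  fix x i
  show "(\<lambda>t. foldr pd is (Tp u m) (x + t *\<^sub>R axis i 1)) differentiable (at 0)"
    unfolding e using Tp_DERIV[of u, OF u] real_differentiable_def by blast
qed

definition psi :: "real \<Rightarrow> real \<Rightarrow> real \<Rightarrow> real \<Rightarrow> real" where
  "psi n a b t = Step (n * (t - a)) * Step (n * (b - t))"

lemma smooth1_psi: "smooth1 (psi n a b)"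
proof -
  have 1: "smooth1 (\<lambda>t. 1 * Step (n * t + (- n * a)))" by (rule smooth1_affine[OF smooth1_Step])
  have 2: "smooth1 (\<lambda>t. 1 * Step ((- n) * t + n * b))" by (rule smooth1_affine[OF smooth1_Step])
  have "psi n a b = (\<lambda>t. (1 * Step (n * t + (- n * a))) * (1 * Step ((- n) * t + n * b)))"
    by (rule ext) (simp add: psi_def algebra_simps)
  then show ?thesis using smooth1_mult[OF 1 2] by simp
qed

lemma psi_bounds: "0 \<le> psi n a b t \<and> psi n a b t \<le> 1"
  unfolding psi_def using Step_bounds[of "n * (t - a)"] Step_bounds[of "n * (b - t)"]
  by (simp add: mult_le_one)

lemma psi_zero: "n \<ge> 0 \<Longrightarrow> t \<notin> {a<..<b} \<Longrightarrow> psi n a b t = 0"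
proof -
  assume n: "n \<ge> 0" and t: "t \<notin> {a<..<b}"
  then consider "t \<le> a" | "b \<le> t" by force
  then show ?thesis
  proof cases
    case 1 then have "n * (t - a) \<le> 0" using n by (simp add: mult_nonneg_nonpos)
    then show ?thesis by (simp add: psi_def Step_zero)
  next
    case 2 then have "n * (b - t) \<le> 0" using n by (simp add: mult_nonneg_nonpos)
    then show ?thesis by (simp add: psi_def Step_zero)
  qed
qed

lemma psi_lim: "((\<lambda>n. psi (real (Suc n)) a b t) \<longlongrightarrow> indicator {a<..<b} t) sequentially"
proof (cases "t \<in> {a<..<b}")
  case False
  then show ?thesis using psi_zero[of _ t a b] by simp
next
  case True
  then have ta: "t - a > 0" and bt: "b - t > 0" by auto
  obtain N :: nat where N: "real N \<ge> 1 / (t - a) + 1 / (b - t)" using real_arch_simple by blast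
  have "eventually (\<lambda>n. psi (real (Suc n)) a b t = 1) sequentially"
    unfolding eventually_sequentially
  proof (intro exI[of _ N] allI impI)
    fix n assume "N \<le> n"
    then have n: "real (Suc n) \<ge> 1 / (t - a) + 1 / (b - t)" using N by linarith
    have "1 / (t - a) \<ge> 0" "1 / (b - t) \<ge> 0" using ta bt by auto
    then have n1: "real (Suc n) \<ge> 1 / (t - a)" "real (Suc n) \<ge> 1 / (b - t)" using n by linarith+
    have "real (Suc n) * (t - a) \<ge> 1"
      using n1(1) ta by (simp add: field_simps)
    moreover have "real (Suc n) * (b - t) \<ge> 1"
      using n1(2) bt by (simp add: field_simps)
    ultimately show "psi (real (Suc n)) a b t = 1" by (simp add: psi_def Step_one)
  qed
  then show ?thesis using True by (simp add: tendsto_eventually)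
qed

definition phi :: "real \<Rightarrow> R3 \<Rightarrow> R3 \<Rightarrow> R3 \<Rightarrow> real" where
  "phi n a b = Tp (\<lambda>i. psi n (a $ i) (b $ i)) (\<lambda>_. 0)"

lemma phi_eq: "phi n a b x = (\<Prod>i\<in>UNIV. psi n (a $ i) (b $ i) (x $ i))"
  by (simp add: phi_def Tp_def)

lemma phi_bounds: "0 \<le> phi n a b x \<and> phi n a b x \<le> 1"
  unfolding phi_eq using psi_bounds by (auto intro: prod_nonneg prod_le_1)

lemma phi_zero: "n \<ge> 0 \<Longrightarrow> x \<notin> box a b \<Longrightarrow> phi n a b x = 0"
proof -
  assume n: "n \<ge> 0" and x: "x \<notin> box a b"
  then obtain i where "x $ i \<notin> {a $ i<..<b $ i}" by (auto simp: mem_box_cart)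
  then have "psi n (a $ i) (b $ i) (x $ i) = 0" using psi_zero[OF n] by blast
  then show ?thesis unfolding phi_eq by (intro prod_zero) auto
qed

lemma phi_lim: "((\<lambda>k. phi (real (Suc k)) a b x) \<longlongrightarrow> indicator (box a b) x) sequentially"
proof -
  have "((\<lambda>k. \<Prod>i\<in>UNIV. psi (real (Suc k)) (a $ i) (b $ i) (x $ i)) \<longlongrightarrow>
        (\<Prod>i\<in>UNIV. indicator {a $ i<..<b $ i} (x $ i))) sequentially"
    by (intro tendsto_prod psi_lim)
  moreover have "(\<Prod>i\<in>UNIV. indicator {a $ i<..<b $ i} (x $ i) :: real) = indicator (box a b) x"
  proof (cases "x \<in> box a b")
    case True then show ?thesis by (auto simp: mem_box_cart indicator_def)
  next
    case False
    then obtain i where "x $ i \<notin> {a $ i<..<b $ i}" by (auto simp: mem_box_cart)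
    then show ?thesis using False by (auto intro!: prod_zero simp: indicator_def)
  qed
  ultimately show ?thesis by (simp add: phi_eq)
qed

lemma Cc_inf_phi: "n \<ge> 0 \<Longrightarrow> Cc_inf UNIV (phi n a b)"
proof -
  assume n: "n \<ge> 0"
  have sm: "smooth_on UNIV (phi n a b)"
    unfolding phi_def by (rule smooth_on_Tp) (rule smooth1_psi)
  have "tsupport (phi n a b) \<subseteq> cbox a b"
    unfolding tsupport_def
  proof (rule closure_minimal)
    show "{x. phi n a b x \<noteq> 0} \<subseteq> cbox a b"
      using phi_zero[OF n] box_subset_cbox by blast
  qed auto
  moreover have "closed (tsupport (phi n a b))" unfolding tsupport_def by simp
  ultimately have "compact (tsupport (phi n a b))"
    using compact_Int_closed[OF compact_cbox, of "tsupport (phi n a b)" a b]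
    by (simp add: Int_absorb1)
  then show ?thesis using sm by (simp add: Cc_inf_def)
qed


lemma AE_zero_boxes:
  fixes h :: "'a::euclidean_space \<Rightarrow> real"
  assumes hm[measurable]: "h \<in> borel_measurable lborel"
    and int: "\<And>a b. integrable lborel (\<lambda>x. indicator (box a b) x * h x)"
    and zero: "\<And>a b. (\<integral>x. indicator (box a b) x * h x \<partial>lborel) = 0"
  shows "AE x in lborel. h x = 0"
proof -
  define hp where "hp = (\<lambda>x. max (h x) 0)"
  define hn where "hn = (\<lambda>x. max (- h x) 0)"
  have [measurable]: "hp \<in> borel_measurable lborel" "hn \<in> borel_measurable lborel"
    unfolding hp_def hn_def by measurable
  have ip: "integrable lborel (\<lambda>x. indicator (box a b) x * hp x)" for a b
    by (rule Bochner_Integration.integrable_bound[OF int[of a b]]) (auto simp: hp_def split: split_indicator)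
  have inn: "integrable lborel (\<lambda>x. indicator (box a b) x * hn x)" for a b
    by (rule Bochner_Integration.integrable_bound[OF int[of a b]]) (auto simp: hn_def split: split_indicator)
  have ieq: "(\<integral>x. indicator (box a b) x * hp x \<partial>lborel) = (\<integral>x. indicator (box a b) x * hn x \<partial>lborel)" for a b
  proof -
    have "(\<lambda>x. indicator (box a b) x * h x) = (\<lambda>x. indicator (box a b) x * hp x - indicator (box a b) x * hn x)"
      by (rule ext) (auto simp: hp_def hn_def max_def split: split_indicator)
    then have "0 = (\<integral>x. indicator (box a b) x * hp x - indicator (box a b) x * hn x \<partial>lborel)"
      using zero[of a b] by simp
    also have "\<dots> = (\<integral>x. indicator (box a b) x * hp x \<partial>lborel) - (\<integral>x. indicator (box a b) x * hn x \<partial>lborel)"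
      by (rule Bochner_Integration.integral_diff[OF ip inn])
    finally show ?thesis by simp
  qed
  have em: "emeasure (density lborel (\<lambda>x. ennreal (f x))) (box a b) = ennreal (\<integral>x. indicator (box a b) x * f x \<partial>lborel)"
    if [measurable]: "f \<in> borel_measurable lborel" and nn: "\<And>x. 0 \<le> f x"
      and fi: "integrable lborel (\<lambda>x. indicator (box a b) x * f x)" for f a b
  proof -
    have "emeasure (density lborel (\<lambda>x. ennreal (f x))) (box a b) = (\<integral>\<^sup>+ x. ennreal (f x) * indicator (box a b) x \<partial>lborel)"
      by (rule emeasure_density) auto
    also have "\<dots> = (\<integral>\<^sup>+ x. ennreal (indicator (box a b) x * f x) \<partial>lborel)"
      by (rule nn_integral_cong) (auto split: split_indicator)
    also have "\<dots> = ennreal (\<integral>x. indicator (box a b) x * f x \<partial>lborel)"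
      by (rule nn_integral_eq_integral[OF fi]) (use nn in auto)
    finally show ?thesis .
  qed
  have hpn: "0 \<le> hp x" "0 \<le> hn x" for x by (auto simp: hp_def hn_def)
  have dens: "density lborel (\<lambda>x. ennreal (hp x)) = density lborel (\<lambda>x. ennreal (hn x))"
  proof (rule measure_eqI_generator_eq[where E="range (\<lambda>(a, b). box a b)" and \<Omega>=UNIV
        and A="\<lambda>n::nat. box (- (real n *\<^sub>R One)) (real n *\<^sub>R One)"])
    show "Int_stable (range (\<lambda>(a, b). box a b :: 'a set))"
      by (auto simp: Int_stable_def box_Int_box)
    show "range (\<lambda>(a, b). box a b :: 'a set) \<subseteq> Pow UNIV" by auto
    show "sets (density lborel (\<lambda>x. ennreal (hp x))) = sigma_sets UNIV (range (\<lambda>(a, b). box a b))"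
      by (simp add: borel_eq_box)
    show "sets (density lborel (\<lambda>x. ennreal (hn x))) = sigma_sets UNIV (range (\<lambda>(a, b). box a b))"
      by (simp add: borel_eq_box)
    show "range (\<lambda>n::nat. box (- (real n *\<^sub>R One)) (real n *\<^sub>R One) :: 'a set) \<subseteq> range (\<lambda>(a, b). box a b)"
      by auto
    show "(\<Union>n::nat. box (- (real n *\<^sub>R One)) (real n *\<^sub>R One) :: 'a set) = UNIV"
      by (rule UN_box_eq_UNIV)
    show "emeasure (density lborel (\<lambda>x. ennreal (hp x))) (box (- (real n *\<^sub>R One)) (real n *\<^sub>R One)) \<noteq> \<infinity>" for n
      by (subst em) (auto simp: hpn ip)
    fix X assume "X \<in> range (\<lambda>(a, b). box a b :: 'a set)"
    then obtain a b where X: "X = box a b" by auto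
    show "emeasure (density lborel (\<lambda>x. ennreal (hp x))) X = emeasure (density lborel (\<lambda>x. ennreal (hn x))) X"
      unfolding X using em[of hp a b] em[of hn a b] hpn ip inn ieq by simp
  qed
  have "AE x in lborel. ennreal (hp x) = ennreal (hn x)"
    by (rule sigma_finite_measure.density_unique[OF sigma_finite_lborel _ _ dens]) auto
  then show ?thesis
    by eventually_elim (auto simp: hp_def hn_def max_def split: if_splits)
qed

lemma AE_zero_tests:
  fixes h :: "R3 \<Rightarrow> real"
  assumes hm[measurable]: "h \<in> borel_measurable lborel"
    and h2: "integrable lborel (\<lambda>x. (h x)^2)"
    and z: "\<And>\<phi>. Cc_inf UNIV \<phi> \<Longrightarrow> (\<integral>x. h x * \<phi> x \<partial>lborel) = 0"
  shows "AE x in lborel. h x = 0"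
proof -
  have ic: "integrable lborel (\<lambda>x. indicator (cbox a b) x * h x)" for a b :: R3
  proof (rule Bochner_Integration.integrable_bound[of _ "\<lambda>x. (h x)^2 + indicator (cbox a b) x"])
    show "integrable lborel (\<lambda>x. (h x)^2 + indicator (cbox a b) x)"
    proof (intro Bochner_Integration.integrable_add integrable_real_indicator)
      show "emeasure lborel (cbox a b) < \<infinity>" by (rule emeasure_lborel_cbox_finite)
    qed (use h2 in auto)
    show "AE x in lborel. norm (indicator (cbox a b) x * h x) \<le> norm ((h x)^2 + indicator (cbox a b) x)"
    proof (rule AE_I2)
      fix x
      have "\<bar>h x\<bar> \<le> (h x)^2 + 1"
      proof (cases "\<bar>h x\<bar> \<le> 1")
        case True then show ?thesis by (smt (verit) zero_le_power2)
      next
        case False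
        then have "\<bar>h x\<bar> * 1 \<le> \<bar>h x\<bar> * \<bar>h x\<bar>" by (intro mult_left_mono) auto
        then show ?thesis by (simp add: power2_eq_square)
      qed
      then show "norm (indicator (cbox a b) x * h x) \<le> norm ((h x)^2 + indicator (cbox a b) x)"
        by (auto split: split_indicator)
    qed
  qed simp
  show ?thesis
  proof (rule AE_zero_boxes[OF hm])
    fix a b :: R3
    show ib: "integrable lborel (\<lambda>x. indicator (box a b) x * h x)"
      by (rule Bochner_Integration.integrable_bound[OF ic[of a b]]) (use box_subset_cbox[of a b] in \<open>auto split: split_indicator\<close>)
    let ?s = "\<lambda>k x. h x * phi (real (Suc k)) a b x"
    have cphi: "continuous_on UNIV (phi n a b)" for n
      unfolding phi_def by (rule Tp_cont) (rule smooth1_psi)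
    have [measurable]: "phi n a b \<in> borel_measurable lborel" for n
      using borel_measurable_continuous_onI[OF cphi] by simp
    have lim: "(\<lambda>k. integral\<^sup>L lborel (?s k)) \<longlonglongrightarrow> (\<integral>x. indicator (box a b) x * h x \<partial>lborel)"
    proof (rule integral_dominated_convergence[where w="\<lambda>x. norm (indicator (cbox a b) x * h x)"])
      show "(\<lambda>x. indicator (box a b) x * h x) \<in> borel_measurable lborel" by measurable
      show "?s k \<in> borel_measurable lborel" for k by measurable
      show "integrable lborel (\<lambda>x. norm (indicator (cbox a b) x * h x))"
        using ic by (rule integrable_norm)
      show "AE x in lborel. (\<lambda>k. ?s k x) \<longlonglongrightarrow> indicator (box a b) x * h x"
        using phi_lim[of a b] by (intro AE_I2) (auto intro!: tendsto_mult_left simp: mult.commute)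
      show "AE x in lborel. norm (?s k x) \<le> norm (indicator (cbox a b) x * h x)" for k
      proof (rule AE_I2)
        fix x
        show "norm (?s k x) \<le> norm (indicator (cbox a b) x * h x)"
        proof (cases "x \<in> box a b")
          case True
          then have "x \<in> cbox a b" using box_subset_cbox by blast
          then show ?thesis using phi_bounds[of "real (Suc k)" a b x]
            by (auto simp: abs_mult intro: mult_left_le)
        next
          case False
          then show ?thesis using phi_zero[of "real (Suc k)" x a b] by simp
        qed
      qed
    qed
    have "integral\<^sup>L lborel (?s k) = 0" for k
      by (rule z[OF Cc_inf_phi]) simp
    then have "(\<lambda>k. integral\<^sup>L lborel (?s k)) \<longlonglongrightarrow> 0" by simp
    with lim show "(\<integral>x. indicator (box a b) x * h x \<partial>lborel) = 0"
      using LIMSEQ_unique by blast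
  qed
qed

lemma good_grad_AE:
  assumes g1: "good_grad u g1" and g2: "good_grad u g2"
  shows "AE x in lborel. g1 x = g2 x"
proof -
  have m1[measurable]: "g1 \<in> borel_measurable lborel" and m2[measurable]: "g2 \<in> borel_measurable lborel"
    using g1 g2 by (auto simp: good_grad_def)
  have comp: "(\<lambda>v::R3. v $ i) \<in> borel_measurable borel" for i
    by (rule borel_measurable_continuous_onI) (auto intro: continuous_intros)
  have [measurable]: "(\<lambda>x. g1 x $ i) \<in> borel_measurable lborel" "(\<lambda>x. g2 x $ i) \<in> borel_measurable lborel" for i
    using measurable_compose[OF m1 comp] measurable_compose[OF m2 comp] by auto
  have "AE x in lborel. g1 x $ i - g2 x $ i = 0" for i
  proof (rule AE_zero_tests)
    show "(\<lambda>x. g1 x $ i - g2 x $ i) \<in> borel_measurable lborel" by measurable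
    show "integrable lborel (\<lambda>x. (g1 x $ i - g2 x $ i)^2)"
    proof (rule Bochner_Integration.integrable_bound[of _ "\<lambda>x. 2 * (norm (g1 x))^2 + 2 * (norm (g2 x))^2"])
      show "integrable lborel (\<lambda>x. 2 * (norm (g1 x))^2 + 2 * (norm (g2 x))^2)"
        using g1 g2 by (auto simp: good_grad_def)
      show "(\<lambda>x. (g1 x $ i - g2 x $ i)^2) \<in> borel_measurable lborel" by measurable
      show "AE x in lborel. norm ((g1 x $ i - g2 x $ i)^2) \<le> norm (2 * (norm (g1 x))^2 + 2 * (norm (g2 x))^2)"
      proof (rule AE_I2)
        fix x
        have a: "\<bar>g1 x $ i\<bar> \<le> norm (g1 x)" "\<bar>g2 x $ i\<bar> \<le> norm (g2 x)" by (rule component_le_norm_cart)+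
        have "(g1 x $ i - g2 x $ i)^2 \<le> 2 * (g1 x $ i)^2 + 2 * (g2 x $ i)^2"
          by (smt (verit) zero_le_power2 power2_diff power2_sum)
        also have "\<dots> \<le> 2 * (norm (g1 x))^2 + 2 * (norm (g2 x))^2"
        proof -
          have "(g1 x $ i)^2 \<le> (norm (g1 x))^2" using a(1) by (metis abs_ge_zero power2_abs power_mono)
          moreover have "(g2 x $ i)^2 \<le> (norm (g2 x))^2" using a(2) by (metis abs_ge_zero power2_abs power_mono)
          ultimately show ?thesis by linarith
        qed
        finally show "norm ((g1 x $ i - g2 x $ i)^2) \<le> norm (2 * (norm (g1 x))^2 + 2 * (norm (g2 x))^2)"
          by simp
      qed
    qed
    fix \<phi> assume \<phi>: "Cc_inf UNIV \<phi>"
    have w1: "integrable lborel (\<lambda>x. g1 x $ i * \<phi> x)" "(\<integral>x. u x * pd i \<phi> x \<partial>lborel) = - (\<integral>x. g1 x $ i * \<phi> x \<partial>lborel)"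
      using g1 \<phi> by (auto simp: good_grad_def weak_grad_def)
    have w2: "integrable lborel (\<lambda>x. g2 x $ i * \<phi> x)" "(\<integral>x. u x * pd i \<phi> x \<partial>lborel) = - (\<integral>x. g2 x $ i * \<phi> x \<partial>lborel)"
      using g2 \<phi> by (auto simp: good_grad_def weak_grad_def)
    have "(\<integral>x. (g1 x $ i - g2 x $ i) * \<phi> x \<partial>lborel) = (\<integral>x. g1 x $ i * \<phi> x - g2 x $ i * \<phi> x \<partial>lborel)"
      by (simp add: algebra_simps)
    also have "\<dots> = (\<integral>x. g1 x $ i * \<phi> x \<partial>lborel) - (\<integral>x. g2 x $ i * \<phi> x \<partial>lborel)"
      by (rule Bochner_Integration.integral_diff[OF w1(1) w2(1)])
    also have "\<dots> = 0" using w1(2) w2(2) by simp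
    finally show "(\<integral>x. (g1 x $ i - g2 x $ i) * \<phi> x \<partial>lborel) = 0" .
  qed
  then have "AE x in lborel. \<forall>i\<in>UNIV. g1 x $ i - g2 x $ i = 0"
    by (intro AE_finite_allI) auto
  then show ?thesis by eventually_elim (simp add: vec_eq_iff)
qed

lemma gradsq_eq:
  assumes g: "good_grad u g"
  shows "gradsq u = (\<integral>x. (norm (g x))^2 \<partial>lborel)"
proof -
  have gg: "good_grad u (grad u)" unfolding grad_def using g by (metis someI)
  have [measurable]: "grad u \<in> borel_measurable lborel" "g \<in> borel_measurable lborel"
    using g gg by (auto simp: good_grad_def)
  have "AE x in lborel. grad u x = g x" by (rule good_grad_AE[OF gg g])
  then show ?thesis unfolding gradsq_def by (intro integral_cong_AE) (auto elim!: eventually_mono)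
qed


lemma cont_supp_integrable:
  fixes f :: "R3 \<Rightarrow> real"
  assumes cf: "continuous_on UNIV f" and supp: "\<And>x. R \<le> norm x \<Longrightarrow> f x = 0"
  shows "integrable lborel f"
proof -
  have "integrable lborel (\<lambda>x. indicator (cball 0 R) x *\<^sub>R f x)"
    by (rule borel_integrable_compact[OF compact_cball continuous_on_subset[OF cf]]) auto
  moreover have "(\<lambda>x. indicator (cball 0 R) x *\<^sub>R f x) = f"
    by (rule ext) (auto simp: indicator_def supp)
  ultimately show ?thesis by simp
qed

lemma integral_translate:
  fixes f :: "R3 \<Rightarrow> real"
  assumes [measurable]: "f \<in> borel_measurable borel"
  shows "(\<integral>x. f (x + c) \<partial>lborel) = (\<integral>x. f x \<partial>lborel)"
proof -
  have "(\<integral>x. f x \<partial>lborel) = (\<integral>x. f x \<partial>(distr lborel borel ((+) c)))"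
    by (simp add: lborel_distr_plus)
  also have "\<dots> = (\<integral>x. f (c + x) \<partial>lborel)"
    by (rule integral_distr) auto
  finally show ?thesis by (simp add: add.commute)
qed

lemma ibp_zero:
  fixes f d :: "R3 \<Rightarrow> real"
  assumes cf: "continuous_on UNIV f" and cd: "continuous_on UNIV d"
    and supp: "\<And>x. R \<le> norm x \<Longrightarrow> f x = 0"
    and der: "\<And>x. ((\<lambda>t. f (x + t *\<^sub>R axis i 1)) has_real_derivative d x) (at 0)"
  shows "integral\<^sup>L lborel d = 0"
proof -
  let ?e = "axis i (1::real) :: R3"
  define s where "s n x = (f (x + inverse (real (Suc n)) *\<^sub>R ?e) - f x) * real (Suc n)" for n x
  have fm[measurable]: "f \<in> borel_measurable borel" by (rule borel_measurable_continuous_onI[OF cf])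
  have dm[measurable]: "d \<in> borel_measurable borel" by (rule borel_measurable_continuous_onI[OF cd])
  have cshift: "continuous_on UNIV (\<lambda>x. f (x + c))" for c
    by (rule continuous_on_compose2[OF cf]) (auto intro: continuous_intros)
  have sm[measurable]: "s n \<in> borel_measurable lborel" for n
  proof -
    have "continuous_on UNIV (s n)" unfolding s_def[abs_def]
      by (intro continuous_intros cshift cf)
    then show ?thesis using borel_measurable_continuous_onI by simp
  qed
  have s0: "integral\<^sup>L lborel (s n) = 0" for n
  proof -
    let ?c = "inverse (real (Suc n)) *\<^sub>R ?e"
    have i1: "integrable lborel (\<lambda>x. f (x + ?c))"
    proof (rule cont_supp_integrable[OF cshift])
      fix x :: R3 assume x: "R + norm ?c \<le> norm x"
      have "norm x \<le> norm (x + ?c) + norm ?c" by (metis add_diff_cancel norm_triangle_ineq4)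
      then show "f (x + ?c) = 0" using x by (intro supp) simp
    qed
    have i2: "integrable lborel f" by (rule cont_supp_integrable[OF cf supp])
    have "integral\<^sup>L lborel (s n) = (\<integral>x. f (x + ?c) - f x \<partial>lborel) * real (Suc n)"
      unfolding s_def by simp
    also have "(\<integral>x. f (x + ?c) - f x \<partial>lborel) = (\<integral>x. f (x + ?c) \<partial>lborel) - (\<integral>x. f x \<partial>lborel)"
      by (rule Bochner_Integration.integral_diff[OF i1 i2])
    also have "\<dots> = 0" using integral_translate[OF fm] by simp
    finally show ?thesis by simp
  qed
  obtain M where M: "\<And>y. y \<in> cball 0 (R + 2) \<Longrightarrow> norm (d y) \<le> M"
    using compact_imp_bounded[OF compact_continuous_image[OF continuous_on_subset[OF cd] compact_cball]]
    unfolding bounded_iff by blast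
  have Fder: "((\<lambda>t. f (x + t *\<^sub>R ?e)) has_real_derivative d (x + \<xi> *\<^sub>R ?e)) (at \<xi>)" for x \<xi>
  proof -
    have "((\<lambda>t. f ((x + \<xi> *\<^sub>R ?e) + t *\<^sub>R ?e)) has_real_derivative d (x + \<xi> *\<^sub>R ?e)) (at 0)"
      by (rule der)
    moreover have "(\<lambda>t. f ((x + \<xi> *\<^sub>R ?e) + t *\<^sub>R ?e)) = (\<lambda>t. f (x + (t + \<xi>) *\<^sub>R ?e))"
      by (rule ext) (simp add: algebra_simps scaleR_add_left)
    ultimately have "((\<lambda>t. f (x + (t + \<xi>) *\<^sub>R ?e)) has_real_derivative d (x + \<xi> *\<^sub>R ?e)) (at 0)"
      by simp
    then show ?thesis using DERIV_shift[of "\<lambda>t. f (x + t *\<^sub>R ?e)" _ 0 \<xi>] by simp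
  qed
  have lim: "(\<lambda>n. integral\<^sup>L lborel (s n)) \<longlonglongrightarrow> integral\<^sup>L lborel d"
  proof (rule integral_dominated_convergence[where w="\<lambda>x::R3. M * indicator (cball (0::R3) (R + 1)) x"])
    show "d \<in> borel_measurable lborel" by simp
    show "integrable lborel (\<lambda>x::R3. M * indicator (cball 0 (R + 1)) x)"
      using emeasure_compact_finite[of "cball (0::R3) (R + 1)"]
      by (intro integrable_mult_right integrable_real_indicator) auto
    show "AE x in lborel. (\<lambda>n. s n x) \<longlonglongrightarrow> d x"
    proof (rule AE_I2)
      fix x
      have "((\<lambda>t. (f (x + t *\<^sub>R ?e) - f (x + 0 *\<^sub>R ?e)) / (t - 0)) \<longlongrightarrow> d x) (at 0)"
        using der[of x] by (simp add: has_field_derivative_iff)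
      moreover have "filterlim (\<lambda>n. inverse (real (Suc n))) (at 0) sequentially"
        unfolding filterlim_at using LIMSEQ_inverse_real_of_nat by simp
      ultimately have "(\<lambda>n. (f (x + inverse (real (Suc n)) *\<^sub>R ?e) - f (x + 0 *\<^sub>R ?e)) / (inverse (real (Suc n)) - 0)) \<longlonglongrightarrow> d x"
        by (rule filterlim_compose)
      then show "(\<lambda>n. s n x) \<longlonglongrightarrow> d x" by (simp add: s_def divide_inverse)
    qed
    fix n
    show "AE x in lborel. norm (s n x) \<le> M * indicator (cball 0 (R + 1)) x"
    proof (rule AE_I2)
      fix x :: R3
      let ?h = "inverse (real (Suc n))"
      have h0: "0 < ?h" "?h \<le> 1" by (auto simp: field_simps)
      show "norm (s n x) \<le> M * indicator (cball 0 (R + 1)) x"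
      proof (cases "norm x \<le> R + 1")
        case False
        have "norm x \<le> norm (x + ?h *\<^sub>R ?e) + norm (?h *\<^sub>R ?e)" by (metis add_diff_cancel norm_triangle_ineq4)
        then have "f (x + ?h *\<^sub>R ?e) = 0" using False h0 by (intro supp) simp
        moreover have "f x = 0" using False by (intro supp) simp
        ultimately show ?thesis using False by (simp add: s_def)
      next
        case True
        obtain z where z: "0 < z" "z < ?h"
          "f (x + ?h *\<^sub>R ?e) - f (x + 0 *\<^sub>R ?e) = (?h - 0) * d (x + z *\<^sub>R ?e)"
          using MVT2[of 0 ?h "\<lambda>t. f (x + t *\<^sub>R ?e)" "\<lambda>t. d (x + t *\<^sub>R ?e)"] h0 Fder by auto
        have "norm (x + z *\<^sub>R ?e) \<le> norm x + norm (z *\<^sub>R ?e)" by (rule norm_triangle_ineq)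
        then have "x + z *\<^sub>R ?e \<in> cball 0 (R + 2)" using True z h0 by simp
        then have dz: "\<bar>d (x + z *\<^sub>R ?e)\<bar> \<le> M" using M by simp
        have "s n x = d (x + z *\<^sub>R ?e)" using z(3) by (simp add: s_def)
        then show ?thesis using dz True by simp
      qed
    qed
  qed (use sm in simp)
  then have "(\<lambda>n. 0::real) \<longlonglongrightarrow> integral\<^sup>L lborel d" using s0 by simp
  then show ?thesis using LIMSEQ_const_iff by metis
qed


lemma norm_aux: "norm (x::'a::real_normed_vector) \<le> norm (x + v) + norm v"
  using norm_triangle_ineq4[of "x + v" v] by simp

lemma Cc_facts:
  assumes "Cc_inf \<Omega> e"
  shows Cc_cont: "continuous_on UNIV e"
    and Cc_contpd: "continuous_on UNIV (pd i e)"
    and Cc_der: "((\<lambda>t. e (x + t *\<^sub>R axis i 1)) has_real_derivative pd i e x) (at 0)"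
proof -
  have sm: "smooth_on UNIV e" using assms by (simp add: Cc_inf_def)
  note sm' = sm[unfolded smooth_on_def, rule_format]
  have "continuous_on UNIV (foldr pd [] e)" by (rule conjunct1[OF sm'])
  then show "continuous_on UNIV e" by simp
  have "continuous_on UNIV (foldr pd [i] e)" by (rule conjunct1[OF sm'])
  then show "continuous_on UNIV (pd i e)" by simp
  have "(\<lambda>t. foldr pd [] e (x + t *\<^sub>R axis i 1)) differentiable (at 0)"
    using conjunct2[OF sm'[of "[]"]] by simp
  then have "((\<lambda>t. e (x + t *\<^sub>R axis i 1)) has_real_derivative deriv (\<lambda>t. e (x + t *\<^sub>R axis i 1)) 0) (at 0)"
    by (simp add: DERIV_deriv_iff_real_differentiable)
  then show "((\<lambda>t. e (x + t *\<^sub>R axis i 1)) has_real_derivative pd i e x) (at 0)"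
    by (simp add: pd_def)
qed

lemma Cc_supp:
  assumes Cc: "Cc_inf \<Omega> e"
  obtains R where "R > 0" "\<And>x. R \<le> norm x \<Longrightarrow> e x = 0" "\<And>x i. R \<le> norm x \<Longrightarrow> pd i e x = 0"
proof -
  have "compact (tsupport e)" using Cc by (simp add: Cc_inf_def)
  then have "bounded (tsupport e)" by (rule compact_imp_bounded)
  then obtain r where r: "0 < r" "tsupport e \<subseteq> ball 0 r"
    using bounded_subset_ballD[of "tsupport e" 0] by auto
  have ez: "e x = 0" if "r \<le> norm x" for x
  proof (rule ccontr)
    assume "e x \<noteq> 0"
    then have "x \<in> {x. e x \<noteq> 0}" by simp
    then have "x \<in> tsupport e" unfolding tsupport_def by (rule subsetD[OF closure_subset])
    then show False using r that by auto
  qed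
  have pz: "pd i e x = 0" if x: "r + 1 \<le> norm x" for x i
  proof -
    have "((\<lambda>t. 0) has_real_derivative 0) (at (0::real))" by simp
    then have d0: "((\<lambda>t. e (x + t *\<^sub>R axis i 1)) has_real_derivative 0) (at 0)"
    proof (rule has_field_derivative_transform_within_open[of _ _ _ "ball 0 1"])
      fix t :: real assume "t \<in> ball 0 1"
      then have t: "\<bar>t\<bar> < 1" by simp
      have "norm x \<le> norm (x + t *\<^sub>R axis i 1) + norm (t *\<^sub>R axis i (1::real))"
        by (rule norm_aux)
      then have "r \<le> norm (x + t *\<^sub>R axis i 1)" using x t by simp
      then show "0 = e (x + t *\<^sub>R axis i 1)" using ez by simp
    qed simp_all
    show ?thesis using DERIV_unique[OF Cc_der[OF Cc] d0] .
  qed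
  show ?thesis
  proof (rule that[of "r + 1"])
    show "0 < r + 1" using r by simp
    show "r + 1 \<le> norm x \<Longrightarrow> e x = 0" for x using ez[of x] by simp
    show "r + 1 \<le> norm x \<Longrightarrow> pd i e x = 0" for x i using pz by simp
  qed
qed

lemma good_grad_Cc:
  assumes Cc: "Cc_inf \<Omega> e"
  shows "good_grad e (\<lambda>x. \<chi> i. pd i e x)"
proof -
  obtain R where R: "R > 0" "\<And>x. R \<le> norm x \<Longrightarrow> e x = 0" "\<And>x i. R \<le> norm x \<Longrightarrow> pd i e x = 0"
    using Cc_supp[OF Cc] by blast
  have ce: "continuous_on UNIV e" by (rule Cc_cont[OF Cc])
  have cg: "continuous_on UNIV (\<lambda>x. \<chi> i. pd i e x)"
    by (intro continuous_on_vec_lambda Cc_contpd[OF Cc])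
  have wg: "weak_grad e (\<lambda>x. \<chi> i. pd i e x)"
    unfolding weak_grad_def
  proof (intro allI impI conjI)
    fix \<phi> i assume \<phi>: "Cc_inf UNIV \<phi>"
    have cp: "continuous_on UNIV \<phi>" "continuous_on UNIV (pd i \<phi>)"
      by (rule Cc_cont[OF \<phi>], rule Cc_contpd[OF \<phi>])
    have cpe: "continuous_on UNIV (pd i e)" by (rule Cc_contpd[OF Cc])
    show i1: "integrable lborel (\<lambda>x. e x * pd i \<phi> x)"
    proof (rule cont_supp_integrable[of _ R])
      show "continuous_on UNIV (\<lambda>x. e x * pd i \<phi> x)" by (intro continuous_on_mult ce cp)
    qed (use R in simp)
    have i2: "integrable lborel (\<lambda>x. pd i e x * \<phi> x)"
    proof (rule cont_supp_integrable[of _ R])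
      show "continuous_on UNIV (\<lambda>x. pd i e x * \<phi> x)" by (intro continuous_on_mult cpe cp)
    qed (use R in simp)
    then show "integrable lborel (\<lambda>x. (\<chi> i. pd i e x) $ i * \<phi> x)" by simp
    have "integral\<^sup>L lborel (\<lambda>x. pd i e x * \<phi> x + e x * pd i \<phi> x) = 0"
    proof (rule ibp_zero[of "\<lambda>x. e x * \<phi> x" _ R])
      show "continuous_on UNIV (\<lambda>x. e x * \<phi> x)" by (intro continuous_on_mult ce cp)
      show "continuous_on UNIV (\<lambda>x. pd i e x * \<phi> x + e x * pd i \<phi> x)"
        by (intro continuous_on_add continuous_on_mult ce cp cpe)
      show "R \<le> norm x \<Longrightarrow> e x * \<phi> x = 0" for x using R by simp
      fix x
      have "((\<lambda>t. e (x + t *\<^sub>R axis i 1) * \<phi> (x + t *\<^sub>R axis i 1)) has_real_derivative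
          pd i e x * \<phi> (x + 0 *\<^sub>R axis i 1) + pd i \<phi> x * e (x + 0 *\<^sub>R axis i 1)) (at 0)"
        by (rule DERIV_mult[OF Cc_der[OF Cc] Cc_der[OF \<phi>]])
      then show "((\<lambda>t. e (x + t *\<^sub>R axis i 1) * \<phi> (x + t *\<^sub>R axis i 1)) has_real_derivative
          pd i e x * \<phi> x + e x * pd i \<phi> x) (at 0)"
        by (simp add: mult.commute)
    qed
    moreover have "integral\<^sup>L lborel (\<lambda>x. pd i e x * \<phi> x + e x * pd i \<phi> x) =
        integral\<^sup>L lborel (\<lambda>x. pd i e x * \<phi> x) + integral\<^sup>L lborel (\<lambda>x. e x * pd i \<phi> x)"
      by (rule Bochner_Integration.integral_add[OF i2 i1])
    ultimately show "(\<integral>x. e x * pd i \<phi> x \<partial>lborel) = - (\<integral>x. (\<chi> i. pd i e x) $ i * \<phi> x \<partial>lborel)"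
      by simp
  qed
  have m: "(\<lambda>x. \<chi> i. pd i e x) \<in> borel_measurable lborel"
    using borel_measurable_continuous_onI[OF cg] by simp
  have "integrable lborel (\<lambda>x. (norm (\<chi> i. pd i e x))^2)"
  proof (rule cont_supp_integrable[of _ R])
    show "continuous_on UNIV (\<lambda>x. (norm (\<chi> i. pd i e x))^2)"
      by (intro continuous_on_power continuous_on_norm cg)
    fix x :: R3 assume "R \<le> norm x"
    then have "(\<chi> i. pd i e x) = 0" using R by (simp add: vec_eq_iff)
    then show "(norm (\<chi> i. pd i e x))^2 = 0" by simp
  qed
  then show ?thesis using wg m by (simp add: good_grad_def)
qed

lemma good_grad_scale:
  assumes g: "good_grad u g"
  shows "good_grad (\<lambda>x. c * u x) (\<lambda>x. c *\<^sub>R g x)"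
proof -
  have wg: "weak_grad u g" and m[measurable]: "g \<in> borel_measurable lborel"
    and i: "integrable lborel (\<lambda>x. (norm (g x))^2)"
    using g by (auto simp: good_grad_def)
  have "weak_grad (\<lambda>x. c * u x) (\<lambda>x. c *\<^sub>R g x)"
    unfolding weak_grad_def
  proof (intro allI impI conjI)
    fix \<phi> i assume \<phi>: "Cc_inf UNIV \<phi>"
    have a: "integrable lborel (\<lambda>x. u x * pd i \<phi> x)" "integrable lborel (\<lambda>x. g x $ i * \<phi> x)"
      "(\<integral>x. u x * pd i \<phi> x \<partial>lborel) = - (\<integral>x. g x $ i * \<phi> x \<partial>lborel)"
      using wg \<phi> unfolding weak_grad_def by auto
    have e1: "(\<lambda>x. c * u x * pd i \<phi> x) = (\<lambda>x. c * (u x * pd i \<phi> x))" by (simp add: mult.assoc)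
    have e2: "(\<lambda>x. (c *\<^sub>R g x) $ i * \<phi> x) = (\<lambda>x. c * (g x $ i * \<phi> x))" by (simp add: mult.assoc)
    show "integrable lborel (\<lambda>x. c * u x * pd i \<phi> x)" unfolding e1 using a(1) by simp
    show "integrable lborel (\<lambda>x. (c *\<^sub>R g x) $ i * \<phi> x)" unfolding e2 using a(2) by simp
    show "(\<integral>x. c * u x * pd i \<phi> x \<partial>lborel) = - (\<integral>x. (c *\<^sub>R g x) $ i * \<phi> x \<partial>lborel)"
      unfolding e1 e2 using a(3) by simp
  qed
  moreover have "(\<lambda>x. c *\<^sub>R g x) \<in> borel_measurable lborel" by measurable
  moreover have "integrable lborel (\<lambda>x. (norm (c *\<^sub>R g x))^2)"
  proof -
    have "(\<lambda>x. (norm (c *\<^sub>R g x))^2) = (\<lambda>x. c^2 * (norm (g x))^2)"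
      by (simp add: power_mult_distrib)
    then show ?thesis using i by simp
  qed
  ultimately show ?thesis by (simp add: good_grad_def)
qed


lemma Cc_D12:
  assumes Cc: "Cc_inf \<Omega> e"
  shows "(\<lambda>x. c * e x) \<in> D12"
proof -
  obtain R where R: "R > 0" "\<And>x. R \<le> norm x \<Longrightarrow> e x = 0" "\<And>x i. R \<le> norm x \<Longrightarrow> pd i e x = 0"
    using Cc_supp[OF Cc] by blast
  have ce: "continuous_on UNIV e" by (rule Cc_cont[OF Cc])
  have m: "(\<lambda>x. c * e x) \<in> borel_measurable lborel"
    using borel_measurable_continuous_onI[OF continuous_on_mult[OF continuous_on_const ce]] by simp
  have i6: "integrable lborel (\<lambda>x. \<bar>c * e x\<bar> ^ 6)"
  proof (rule cont_supp_integrable[of _ R])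
    show "continuous_on UNIV (\<lambda>x. \<bar>c * e x\<bar> ^ 6)"
      by (intro continuous_on_power continuous_on_rabs continuous_on_mult continuous_on_const ce)
  qed (use R in simp)
  have "good_grad (\<lambda>x. c * e x) (\<lambda>x. c *\<^sub>R (\<chi> i. pd i e x))"
    by (rule good_grad_scale[OF good_grad_Cc[OF Cc]])
  then show ?thesis using m i6 unfolding D12_def by blast
qed

theorem lemma2p5:
  fixes \<alpha> \<beta> bstar :: real and V W e0 :: fn3 and \<xi> :: "real \<Rightarrow> real"
  assumes "\<alpha> > 1" "\<beta> > 1" "\<alpha> + \<beta> \<le> 4"
    and "H1 V W" "H2 V W"
    and "cutoff \<xi>"
    and "Cc_inf (interior (V -` {0}) \<inter> interior (W -` {0})) e0"
    and "\<exists>x. e0 x > 0"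
    and "bstar > 0"
    and "\<forall>T>0. \<forall>lam>0. \<forall>b1>0. \<forall>b2>0. b1 + b2 < bstar \<longrightarrow>
           Jfun \<xi> \<alpha> \<beta> b1 b2 T lam V W (e0, e0) < 0"
  shows "\<exists>D>0. \<forall>lam\<ge>1. \<forall>T>0. \<forall>b1>0. \<forall>b2>0. b1 + b2 < bstar \<longrightarrow>
           mp_level \<xi> \<alpha> \<beta> b1 b2 T lam V W e0 \<le> ereal D"
proof -
  note Cc = assms(7)
  define g0 where "g0 = (\<lambda>x. \<chi> i. pd i e0 x)"
  have gg: "good_grad e0 g0" unfolding g0_def by (rule good_grad_Cc[OF Cc])
  define G where "G = (\<integral>x. (norm (g0 x))^2 \<partial>lborel)"
  have G0: "G \<ge> 0" unfolding G_def by (rule integral_nonneg_AE) simp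
  have gs: "gradsq (\<lambda>x. c * e0 x) = c^2 * G" for c
  proof -
    have "gradsq (\<lambda>x. c * e0 x) = (\<integral>x. (norm (c *\<^sub>R g0 x))^2 \<partial>lborel)"
      by (rule gradsq_eq[OF good_grad_scale[OF gg]])
    also have "\<dots> = (\<integral>x. c^2 * (norm (g0 x))^2 \<partial>lborel)"
      by (simp add: power_mult_distrib)
    also have "\<dots> = c^2 * G" unfolding G_def by simp
    finally show ?thesis .
  qed
  have VW0: "V x = 0 \<and> W x = 0" if "e0 x \<noteq> 0" for x
  proof -
    have "x \<in> {x. e0 x \<noteq> 0}" using that by simp
    then have "x \<in> tsupport e0" unfolding tsupport_def by (rule subsetD[OF closure_subset])
    then have "x \<in> interior (V -` {0}) \<inter> interior (W -` {0})" using Cc by (auto simp: Cc_inf_def)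
    then show ?thesis using interior_subset by blast
  qed
  have Vz: "(\<lambda>x. V x * (c * e0 x)^2) = (\<lambda>x. 0)" for c
    by (rule ext) (use VW0 in auto)
  have Wz: "(\<lambda>x. W x * (c * e0 x)^2) = (\<lambda>x. 0)" for c
    by (rule ext) (use VW0 in auto)
  have EV: "(\<lambda>x. c * e0 x) \<in> E_pot V" for c
    unfolding E_pot_def using Cc_D12[OF Cc, of c] Vz[of c] by simp
  have EW: "(\<lambda>x. c * e0 x) \<in> E_pot W" for c
    unfolding E_pot_def using Cc_D12[OF Cc, of c] Wz[of c] by simp
  have ns: "normsq lam V W (\<lambda>x. c * e0 x, \<lambda>x. c * e0 x) = 2 * c^2 * G" for lam c
    unfolding normsq_def using Vz[of c] Wz[of c] gs[of c] by simp
  define \<gamma> where "\<gamma> t = ((\<lambda>x. t * e0 x), (\<lambda>x. t * e0 x))" for t :: real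
  have path: "\<gamma> \<in> paths lam V W e0" for lam
    unfolding paths_def
  proof (intro CollectI conjI ballI allI impI)
    fix t :: real
    show "\<gamma> t \<in> E_sp V W" using EV EW by (simp add: \<gamma>_def E_sp_def)
  next
    fix t :: real and \<epsilon> :: real assume "t \<in> {0..1}" and \<epsilon>: "\<epsilon> > 0"
    define \<delta> where "\<delta> = \<epsilon> / (sqrt (2 * G) + 1)"
    have sG: "sqrt (2 * G) \<ge> 0" using G0 by simp
    have sG1: "sqrt (2 * G) + 1 > 0" using sG by linarith
    then have \<delta>0: "\<delta> > 0" unfolding \<delta>_def using \<epsilon> by (rule divide_pos_pos[rotated])
    show "\<exists>\<delta>>0. \<forall>s\<in>{0..1}. \<bar>s - t\<bar> < \<delta> \<longrightarrow>
        sqrt (normsq lam V W (\<lambda>x. fst (\<gamma> s) x - fst (\<gamma> t) x, \<lambda>x. snd (\<gamma> s) x - snd (\<gamma> t) x)) < \<epsilon>"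
    proof (intro exI[of _ \<delta>] conjI ballI impI)
      show "\<delta> > 0" by (rule \<delta>0)
      fix s :: real assume "s \<in> {0..1}" and st: "\<bar>s - t\<bar> < \<delta>"
      have "(\<lambda>x. s * e0 x - t * e0 x) = (\<lambda>x. (s - t) * e0 x)"
        by (rule ext) (simp add: algebra_simps)
      then have "normsq lam V W (\<lambda>x. fst (\<gamma> s) x - fst (\<gamma> t) x, \<lambda>x. snd (\<gamma> s) x - snd (\<gamma> t) x)
          = 2 * (s - t)^2 * G"
        using ns[of lam "s - t"] by (simp add: \<gamma>_def)
      then have "sqrt (normsq lam V W (\<lambda>x. fst (\<gamma> s) x - fst (\<gamma> t) x, \<lambda>x. snd (\<gamma> s) x - snd (\<gamma> t) x))
          = \<bar>s - t\<bar> * sqrt (2 * G)"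
        by (simp add: real_sqrt_mult)
      also have "\<dots> \<le> \<bar>s - t\<bar> * (sqrt (2 * G) + 1)" by (simp add: mult_left_mono)
      also have "\<dots> < \<delta> * (sqrt (2 * G) + 1)"
        using st sG1 by (rule mult_strict_right_mono)
      also have "\<dots> = \<epsilon>" unfolding \<delta>_def using sG1 by simp
      finally show "sqrt (normsq lam V W (\<lambda>x. fst (\<gamma> s) x - fst (\<gamma> t) x, \<lambda>x. snd (\<gamma> s) x - snd (\<gamma> t) x)) < \<epsilon>" .
    qed
  next
    show "\<gamma> 0 = (\<lambda>x. 0, \<lambda>x. 0)" by (simp add: \<gamma>_def)
  next
    show "\<gamma> 1 = (e0, e0)" by (simp add: \<gamma>_def)
  qed
  have cut: "\<And>y. y \<ge> 0 \<Longrightarrow> 0 \<le> \<xi> y \<and> \<xi> y \<le> 1" using assms(6) by (simp add: cutoff_def)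
  have ab: "\<alpha> + \<beta> > 0" using assms(1,2) by simp
  have Jb: "Jfun \<xi> \<alpha> \<beta> b1 b2 T lam V W (\<gamma> t) \<le> G + bstar * G^2 / 4"
    if t: "t \<in> {0..1}" and b1: "b1 > 0" and b2: "b2 > 0" and bs: "b1 + b2 < bstar" for t b1 b2 T lam
  proof -
    let ?N = "normsq lam V W (\<gamma> t)"
    let ?g = "gradsq (\<lambda>x. t * e0 x)"
    let ?I = "\<integral>x. (max (t * e0 x) 0) powr \<alpha> * (max (t * e0 x) 0) powr \<beta> \<partial>lborel"
    have N: "?N = 2 * t^2 * G" unfolding \<gamma>_def by (rule ns)
    have g: "?g = t^2 * G" by (rule gs)
    have t2: "t^2 \<le> 1" "0 \<le> t^2" using t by (auto simp: power_le_one)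
    have tG: "t^2 * G \<le> G" "0 \<le> t^2 * G" using t2 G0 by (auto simp: mult_left_le_one_le)
    have J: "Jfun \<xi> \<alpha> \<beta> b1 b2 T lam V W (\<gamma> t) =
        ?N / 2 + \<xi> (?N / T^2) * (b1 * ?g^2 + b2 * ?g^2) / 4 - ?I / (\<alpha> + \<beta>)"
      by (simp add: Jfun_def \<gamma>_def)
    have I0: "?I \<ge> 0" by (rule integral_nonneg_AE) simp
    have I1: "?I / (\<alpha> + \<beta>) \<ge> 0" using I0 ab by simp
    have N1: "?N / 2 \<le> G" using N tG by simp
    have N0: "?N / T^2 \<ge> 0" using N tG by simp
    have xi: "0 \<le> \<xi> (?N / T^2)" "\<xi> (?N / T^2) \<le> 1" using cut[OF N0] by auto
    have gg2: "?g^2 \<le> G^2" "0 \<le> ?g^2" using g tG by (auto intro: power_mono)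
    have B0: "0 \<le> b1 * ?g^2 + b2 * ?g^2" using b1 b2 gg2 by simp
    have "b1 * ?g^2 + b2 * ?g^2 = (b1 + b2) * ?g^2" by (simp add: algebra_simps)
    also have "\<dots> \<le> bstar * G^2"
      using bs b1 b2 gg2 by (intro mult_mono) auto
    finally have B1: "b1 * ?g^2 + b2 * ?g^2 \<le> bstar * G^2" .
    have "\<xi> (?N / T^2) * (b1 * ?g^2 + b2 * ?g^2) \<le> 1 * (b1 * ?g^2 + b2 * ?g^2)"
      using xi B0 by (intro mult_right_mono) auto
    then have X: "\<xi> (?N / T^2) * (b1 * ?g^2 + b2 * ?g^2) / 4 \<le> bstar * G^2 / 4" using B1 by simp
    show ?thesis unfolding J using N1 X I1 by linarith
  qed
  define D where "D = G + bstar * G^2 / 4 + 1"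
  have D0: "D > 0" unfolding D_def using G0 assms(9) by (simp add: add_nonneg_pos)
  show ?thesis
  proof (intro exI[of _ D] conjI allI impI)
    show "D > 0" by (rule D0)
    fix lam T b1 b2 :: real
    assume "1 \<le> lam" "0 < T" "0 < b1" "0 < b2" "b1 + b2 < bstar"
    have "mp_level \<xi> \<alpha> \<beta> b1 b2 T lam V W e0 \<le> (SUP t\<in>{0..1}. ereal (Jfun \<xi> \<alpha> \<beta> b1 b2 T lam V W (\<gamma> t)))"
      unfolding mp_level_def by (rule INF_lower[OF path])
    also have "\<dots> \<le> ereal D"
    proof (rule SUP_least)
      fix t :: real assume "t \<in> {0..1}"
      then have "Jfun \<xi> \<alpha> \<beta> b1 b2 T lam V W (\<gamma> t) \<le> D"
        using Jb[of t b1 b2 T lam] \<open>0 < b1\<close> \<open>0 < b2\<close> \<open>b1 + b2 < bstar\<close> unfolding D_def by simp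
      then show "ereal (Jfun \<xi> \<alpha> \<beta> b1 b2 T lam V W (\<gamma> t)) \<le> ereal D" by simp
    qed
    finally show "mp_level \<xi> \<alpha> \<beta> b1 b2 T lam V W e0 \<le> ereal D" .
  qed
qed

end
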